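(* Let $\mathbb{F}$ be a finite field with $q$ elements, let $\gamma\in(0,1/2]$, and let $H\subseteq\mathbb{F}^2$ with $|H|=2\gamma q^2$. Let $r$ be an integer with $\frac{2\ln q}{\gamma^2}<r\le\gamma q$. Then there exist subsets $S_1,S_2\subseteq\mathbb{F}$ such that (1) $|S_1|=r$; (2) $|S_2|\ge\gamma q$; (3) $|(\mathbb{F}\times S_2)\cap H|\ge|H|/2=\gamma q^2$; (4) for all $b\in S_2$, $|\{(a,b):a\in\mathbb{F}\}\cap H|\ge\gamma q$; (5) for all $b\in S_2$, $|\{(a,b):a\in S_1\}\cap H|\ge\frac{\gamma}{2}|S_1|$. *)

theory Defs
  imports Complex_Main
begin

end

theory Submission imports Defs "HOL-Probability.Hoeffding" begin

lemma pow_sum_subsets: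
  fixes z :: real
  assumes "finite U"
  shows "(1 + z) ^ card U = (\<Sum>T\<in>Pow U. z ^ card T)"
  using prod_add[OF assms, of "\<lambda>_. z" "\<lambda>_. 1"] by (simp add: add.commute)

lemma choose_step: "Suc k * (n choose Suc k) = (n - k) * (n choose k)"
  by (metis binomial_absorb_comp binomial_absorption)

lemma choose_ratio:
  assumes "b \<le> q" "0 < q"
  shows "real (b choose t) \<le> real (q choose t) * (real b / real q) ^ t"
proof (induction t)
  case 0 then show ?case by simp
next
  case (Suc t)
  have e1: "real (b choose Suc t) = real (b - t) / real (Suc t) * real (b choose t)"
    using choose_step[of t b] by (simp add: field_simps flip: of_nat_mult)
  have e2: "real (q choose Suc t) = real (q - t) / real (Suc t) * real (q choose t)"
    using choose_step[of t q] by (simp add: field_simps flip: of_nat_mult)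
  have key: "real (b - t) \<le> real (q - t) * (real b / real q)"
  proof (cases "t \<le> b")
    case True
    then have "real (b - t) = real b - real t" "real (q - t) = real q - real t" using assms by auto
    moreover have "(real b - real t) * real q \<le> (real q - real t) * real b"
      using assms by (simp add: algebra_simps mult_right_mono)
    ultimately show ?thesis using assms by (simp add: field_simps)
  next
    case False then show ?thesis by simp
  qed
  have "real (b choose Suc t) \<le> real (b - t) / real (Suc t) * (real (q choose t) * (real b / real q) ^ t)"
    unfolding e1 by (rule mult_left_mono[OF Suc.IH]) simp
  also have "\<dots> \<le> real (q - t) * (real b / real q) / real (Suc t) * (real (q choose t) * (real b / real q) ^ t)"
    by (intro mult_right_mono divide_right_mono key) auto
  also have "\<dots> = real (q choose Suc t) * (real b / real q) ^ Suc t"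
    unfolding e2 by (simp add: field_simps)
  finally show ?case .
qed


lemma card_supsets_le:
  fixes T :: "'a::finite set"
  shows "card {S. card S = r \<and> T \<subseteq> S} \<le> (if card T \<le> r then (CARD('a) - card T) choose (r - card T) else 0)"
proof (cases "card T \<le> r")
  case True
  have "{S. card S = r \<and> T \<subseteq> S} \<subseteq> (\<lambda>R. R \<union> T) ` {R. R \<subseteq> -T \<and> card R = r - card T}"
  proof
    fix S assume S: "S \<in> {S. card S = r \<and> T \<subseteq> S}"
    then have "S = (S - T) \<union> T" "S - T \<subseteq> -T" "card (S - T) = r - card T"
      by (auto simp: card_Diff_subset)
    then show "S \<in> (\<lambda>R. R \<union> T) ` {R. R \<subseteq> -T \<and> card R = r - card T}" by blast
  qed
  then have "card {S. card S = r \<and> T \<subseteq> S} \<le> card ((\<lambda>R. R \<union> T) ` {R. R \<subseteq> -T \<and> card R = r - card T})"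
    by (intro card_mono) auto
  also have "\<dots> \<le> card {R. R \<subseteq> -T \<and> card R = r - card T}" by (rule card_image_le) auto
  also have "\<dots> = card (-T) choose (r - card T)" by (rule n_subsets) auto
  also have "card (-T) = CARD('a) - card T"
    using card_Diff_subset[of T UNIV] by (simp add: Compl_eq_Diff_UNIV)
  finally show ?thesis using True by simp
next
  case False
  have "\<And>S::'a set. T \<subseteq> S \<Longrightarrow> card T \<le> card S" by (simp add: card_mono)
  then have "{S. card S = r \<and> T \<subseteq> S} = {}" using False by fastforce
  then show ?thesis using False by simp
qed

lemma sum_Pow_group:
  fixes f :: "nat \<Rightarrow> real"
  assumes "finite B"
  shows "(\<Sum>T\<in>Pow B. f (card T)) = (\<Sum>t\<le>card B. real (card B choose t) * f t)"
proof -
  have "(\<Sum>T\<in>Pow B. f (card T)) = (\<Sum>t\<in>{..card B}. \<Sum>T\<in>{T\<in>Pow B. card T = t}. f (card T))"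
    by (rule sum.group[symmetric]) (use assms in \<open>auto intro: card_mono\<close>)
  also have "\<dots> = (\<Sum>t\<le>card B. real (card B choose t) * f t)"
  proof (rule sum.cong[OF refl])
    fix t
    have e: "{T\<in>Pow B. card T = t} = {T. T \<subseteq> B \<and> card T = t}" by auto
    have "(\<Sum>T\<in>{T\<in>Pow B. card T = t}. f (card T)) = (\<Sum>T\<in>{T\<in>Pow B. card T = t}. f t)"
      by (rule sum.cong) auto
    also have "\<dots> = real (card {T\<in>Pow B. card T = t}) * f t" by simp
    also have "\<dots> = real (card B choose t) * f t" unfolding e n_subsets[OF assms] ..
    finally show "(\<Sum>T\<in>{T\<in>Pow B. card T = t}. f (card T)) = real (card B choose t) * f t" .
  qed
  finally show ?thesis .
qed

lemma weight_sum:
  fixes B :: "'a::finite set" and w :: real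
  assumes w: "w \<ge> 1"
  shows "(\<Sum>S\<in>{S. card S = r}. w ^ card (S \<inter> B))
         \<le> real (CARD('a) choose r) * (1 + (w - 1) * real (card B) / real CARD('a)) ^ r"
proof -
  define q where "q = CARD('a)"
  define z where "z = w - 1"
  have z: "z \<ge> 0" using w by (simp add: z_def)
  define g where "g t = (if t \<le> r then (q - t) choose (r - t) else 0)" for t
  define x where "x = z * real (card B) / real q"
  have q0: "0 < q" by (simp add: q_def)
  have bq: "card B \<le> q" by (simp add: q_def card_mono)
  have x0: "x \<ge> 0" using z by (simp add: x_def)
  have "(\<Sum>S\<in>{S. card S = r}. w ^ card (S \<inter> B)) = (\<Sum>S\<in>{S::'a set. card S = r}. \<Sum>T\<in>{T\<in>Pow B. T \<subseteq> S}. z ^ card T)"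
  proof (rule sum.cong[OF refl])
    fix S :: "'a set"
    have "w ^ card (S \<inter> B) = (1 + z) ^ card (S \<inter> B)" by (simp add: z_def)
    also have "\<dots> = (\<Sum>T\<in>Pow (S \<inter> B). z ^ card T)" by (rule pow_sum_subsets) simp
    also have "Pow (S \<inter> B) = {T\<in>Pow B. T \<subseteq> S}" by auto
    finally show "w ^ card (S \<inter> B) = (\<Sum>T\<in>{T\<in>Pow B. T \<subseteq> S}. z ^ card T)" .
  qed
  also have "\<dots> = (\<Sum>T\<in>Pow B. \<Sum>S\<in>{S\<in>{S::'a set. card S = r}. T \<subseteq> S}. z ^ card T)"
    by (rule sum.swap_restrict) auto
  also have "\<dots> = (\<Sum>T\<in>Pow B. z ^ card T * real (card {S::'a set. card S = r \<and> T \<subseteq> S}))"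
    by (intro sum.cong refl) (simp add: mult.commute)
  also have "\<dots> \<le> (\<Sum>T\<in>Pow B. z ^ card T * real (g (card T)))"
  proof (intro sum_mono mult_left_mono)
    fix T :: "'a set"
    show "real (card {S::'a set. card S = r \<and> T \<subseteq> S}) \<le> real (g (card T))"
      using card_supsets_le[of r T] by (simp add: g_def q_def split: if_splits)
  qed (use z in simp)
  also have "\<dots> = (\<Sum>t\<le>card B. real (card B choose t) * (z ^ t * real (g t)))"
    by (rule sum_Pow_group) simp
  also have "\<dots> \<le> (\<Sum>t\<le>card B. real (q choose r) * real (r choose t) * x ^ t)"
  proof (rule sum_mono)
    fix t assume t: "t \<in> {..card B}"
    have "real (card B choose t) * real (g t) \<le> real (q choose r) * real (r choose t) * (real (card B) / real q) ^ t"
    proof (cases "t \<le> r \<and> r \<le> q")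
      case True
      have "real (card B choose t) * real (g t) \<le> real (q choose t) * (real (card B) / real q) ^ t * real ((q - t) choose (r - t))"
        using True by (simp add: g_def; intro mult_right_mono choose_ratio bq q0; simp)
      also have "\<dots> = (real (q choose t) * real ((q - t) choose (r - t))) * (real (card B) / real q) ^ t"
        by (simp add: ac_simps)
      also have "real (q choose t) * real ((q - t) choose (r - t)) = real (q choose r) * real (r choose t)"
        using choose_mult[of t r q] True by (simp flip: of_nat_mult)
      finally show ?thesis .
    next
      case False
      then have "g t = 0" using t bq by (auto simp: g_def)
      then show ?thesis by simp
    qed
    then have "z ^ t * (real (card B choose t) * real (g t)) \<le> z ^ t * (real (q choose r) * real (r choose t) * (real (card B) / real q) ^ t)"
      by (rule mult_left_mono) (use z in simp)
    then show "real (card B choose t) * (z ^ t * real (g t)) \<le> real (q choose r) * real (r choose t) * x ^ t"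
      by (simp add: x_def power_mult_distrib power_divide algebra_simps)
  qed
  also have "\<dots> \<le> (\<Sum>t\<le>card B + r. real (q choose r) * real (r choose t) * x ^ t)"
    by (rule sum_mono2) (use x0 in auto)
  also have "\<dots> = (\<Sum>t\<le>r. real (q choose r) * real (r choose t) * x ^ t)"
    by (rule sum.mono_neutral_right) auto
  also have "\<dots> = real (q choose r) * (x + 1) ^ r"
    by (simp add: binomial_ring sum_distrib_left mult.assoc)
  finally show ?thesis by (simp add: x_def z_def q_def add.commute)
qed


lemma tail_bound:
  fixes A :: "'a::finite set" and \<gamma> :: real
  assumes g0: "0 < \<gamma>" and g1: "\<gamma> \<le> 1"
    and cA: "real (card A) \<ge> \<gamma> * real CARD('a)"
  shows "real (card {S. card S = r \<and> real (card (S \<inter> A)) < \<gamma> / 2 * real r})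
         \<le> real (CARD('a) choose r) * exp (- (\<gamma>^2 * real r / 2))"
proof -
  define q where "q = CARD('a)"
  define B where "B = - A"
  define w where "w = exp (2 * \<gamma>)"
  define Bad where "Bad = {S::'a set. card S = r \<and> real (card (S \<inter> A)) < \<gamma> / 2 * real r}"
  have q0: "0 < q" by (simp add: q_def)
  have w1: "w \<ge> 1" using g0 by (simp add: w_def)
  have cB: "card B = q - card A" unfolding B_def q_def
    using card_Diff_subset[of A UNIV] by (simp add: Compl_eq_Diff_UNIV)
  have cAq: "card A \<le> q" by (simp add: q_def card_mono)
  have frac: "real (card B) / real q \<le> 1 - \<gamma>"
    using cA cAq q0 by (simp add: cB of_nat_diff field_simps q_def)
  have split: "card (S \<inter> A) + card (S \<inter> B) = card S" for S :: "'a set"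
    unfolding B_def by (metis Diff_eq Int_Diff card_Int_Diff finite)
  have "real (card Bad) * exp (2 * \<gamma> * real r * (1 - \<gamma>/2)) = (\<Sum>S\<in>Bad. exp (2 * \<gamma> * real r * (1 - \<gamma>/2)))"
    by simp
  also have "\<dots> \<le> (\<Sum>S\<in>Bad. w ^ card (S \<inter> B))"
  proof (rule sum_mono)
    fix S assume S: "S \<in> Bad"
    then have "real (card (S \<inter> A)) + real (card (S \<inter> B)) = real r"
      using split[of S] unfolding Bad_def by (simp flip: of_nat_add)
    with S have "real (card (S \<inter> B)) \<ge> real r * (1 - \<gamma>/2)" unfolding Bad_def by (simp add: algebra_simps)
    then have "2 * \<gamma> * real r * (1 - \<gamma>/2) \<le> 2 * \<gamma> * real (card (S \<inter> B))"
      using g0 by (simp add: mult.assoc mult_left_mono)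
    then have "exp (2 * \<gamma> * real r * (1 - \<gamma>/2)) \<le> exp (real (card (S \<inter> B)) * (2 * \<gamma>))"
      by (simp add: algebra_simps)
    also have "\<dots> = w ^ card (S \<inter> B)" by (simp add: w_def exp_of_nat_mult)
    finally show "exp (2 * \<gamma> * real r * (1 - \<gamma>/2)) \<le> w ^ card (S \<inter> B)" .
  qed
  also have "\<dots> \<le> (\<Sum>S\<in>{S. card S = r}. w ^ card (S \<inter> B))"
    by (rule sum_mono2) (auto simp: Bad_def w_def)
  also have "\<dots> \<le> real (q choose r) * (1 + (w - 1) * real (card B) / real q) ^ r"
    unfolding q_def by (rule weight_sum[OF w1])
  also have "\<dots> \<le> real (q choose r) * (1 + (1 - \<gamma>) * (exp (2 * \<gamma>) - 1)) ^ r"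
  proof (intro mult_left_mono power_mono)
    have "(w - 1) * real (card B) / real q = (w - 1) * (real (card B) / real q)" by simp
    also have "\<dots> \<le> (w - 1) * (1 - \<gamma>)" by (rule mult_left_mono[OF frac]) (use w1 in simp)
    finally show "1 + (w - 1) * real (card B) / real q \<le> 1 + (1 - \<gamma>) * (exp (2 * \<gamma>) - 1)"
      by (simp add: w_def algebra_simps)
    show "0 \<le> 1 + (w - 1) * real (card B) / real q" using w1 by simp
  qed simp
  also have "\<dots> \<le> real (q choose r) * exp (2 * \<gamma> * (1 - \<gamma>) + \<gamma>^2 / 2) ^ r"
  proof (intro mult_left_mono power_mono)
    have pos: "0 < 1 + (1 - \<gamma>) * (exp (2 * \<gamma>) - 1)"
      using g0 g1 by (intro add_pos_nonneg mult_nonneg_nonneg) auto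
    have "- (2 * \<gamma>) * (1 - \<gamma>) + ln (1 + (1 - \<gamma>) * (exp (2 * \<gamma>) - 1)) \<le> (2 * \<gamma>)^2 / 8"
      using Hoeffdings_lemma_aux[of "2 * \<gamma>" "1 - \<gamma>"] g0 g1 by simp
    then have "ln (1 + (1 - \<gamma>) * (exp (2 * \<gamma>) - 1)) \<le> 2 * \<gamma> * (1 - \<gamma>) + \<gamma>^2 / 2"
      by (simp add: power2_eq_square)
    then show "1 + (1 - \<gamma>) * (exp (2 * \<gamma>) - 1) \<le> exp (2 * \<gamma> * (1 - \<gamma>) + \<gamma>^2 / 2)"
      using pos by (metis exp_le_cancel_iff exp_ln)
    show "0 \<le> 1 + (1 - \<gamma>) * (exp (2 * \<gamma>) - 1)" using pos by simp
  qed simp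
  also have "\<dots> = real (q choose r) * exp (real r * (2 * \<gamma> * (1 - \<gamma>) + \<gamma>^2 / 2))"
    by (simp add: exp_of_nat_mult)
  finally have "real (card Bad) * exp (2 * \<gamma> * real r * (1 - \<gamma>/2))
     \<le> real (q choose r) * exp (real r * (2 * \<gamma> * (1 - \<gamma>) + \<gamma>^2 / 2))" .
  then have "real (card Bad) \<le> real (q choose r) * exp (real r * (2 * \<gamma> * (1 - \<gamma>) + \<gamma>^2 / 2)) / exp (2 * \<gamma> * real r * (1 - \<gamma>/2))"
    by (simp add: field_simps)
  also have "\<dots> = real (q choose r) * exp (real r * (2 * \<gamma> * (1 - \<gamma>) + \<gamma>^2 / 2) - 2 * \<gamma> * real r * (1 - \<gamma>/2))"
    by (simp add: exp_diff)
  also have "real r * (2 * \<gamma> * (1 - \<gamma>) + \<gamma>^2 / 2) - 2 * \<gamma> * real r * (1 - \<gamma>/2) = - (\<gamma>^2 * real r / 2)"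
    by (simp add: algebra_simps power2_eq_square)
  finally show ?thesis unfolding Bad_def q_def .
qed


theorem lemmaA2:
  fixes H :: "('a::{finite,field} \<times> 'a) set"
    and \<gamma> :: real and r :: nat
  defines "q \<equiv> card (UNIV :: 'a set)"
  assumes "0 < \<gamma>" and "\<gamma> \<le> 1/2"
    and "real (card H) = 2 * \<gamma> * real q ^ 2"
    and "2 * ln (real q) / \<gamma>^2 < real r" and "real r \<le> \<gamma> * real q"
  shows "\<exists>S1 S2 :: 'a set.
           card S1 = r \<and>
           real (card S2) \<ge> \<gamma> * real q \<and>
           real (card ((UNIV \<times> S2) \<inter> H)) \<ge> real (card H) / 2 \<and>
           (\<forall>b\<in>S2. real (card ({(a, b) | a. True} \<inter> H)) \<ge> \<gamma> * real q) \<and>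
           (\<forall>b\<in>S2. real (card ({(a, b) | a. a \<in> S1} \<inter> H)) \<ge> \<gamma> / 2 * real (card S1))"
proof -
  note g0 = assms(2) and g1 = assms(3) and cH = assms(4) and rlo = assms(5) and rhi = assms(6)
  define A where "A c = {a. (a, c) \<in> H}" for c
  define S2 where "S2 = {c. real (card (A c)) \<ge> \<gamma> * real q}"
  have q0: "0 < q" by (simp add: q_def)
  have row: "{(a, b) | a. a \<in> X} \<inter> H = (\<lambda>a. (a, b)) ` (X \<inter> A b)" for X b
    by (auto simp: A_def)
  have crow: "card ({(a, b) | a. a \<in> X} \<inter> H) = card (X \<inter> A b)" for X b
    unfolding row by (rule card_image) (auto intro: inj_onI)
  have crow2: "card ({(a, b) | a. True} \<inter> H) = card (A b)" for b
    using crow[where X=UNIV and b=b] by simp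
  have colsum: "card ((UNIV \<times> C) \<inter> H) = (\<Sum>c\<in>C. card (A c))" for C
  proof -
    have "(UNIV \<times> C) \<inter> H = (\<Union>c\<in>C. (\<lambda>a. (a, c)) ` A c)" by (auto simp: A_def)
    moreover have "card (\<Union>c\<in>C. (\<lambda>a. (a, c)) ` A c) = (\<Sum>c\<in>C. card ((\<lambda>a. (a, c)) ` A c))"
      by (rule card_UN_disjoint) auto
    moreover have "card ((\<lambda>a. (a, c)) ` A c) = card (A c)" for c
      by (rule card_image) (auto intro: inj_onI)
    ultimately show ?thesis by simp
  qed
  have cAq: "card (A c) \<le> q" for c by (simp add: q_def card_mono)
  have Hsplit: "card H = card ((UNIV \<times> S2) \<inter> H) + card ((UNIV \<times> (-S2)) \<inter> H)"
  proof -
    have "H = ((UNIV \<times> S2) \<inter> H) \<union> ((UNIV \<times> (-S2)) \<inter> H)" by auto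
    then have "card H = card (((UNIV \<times> S2) \<inter> H) \<union> ((UNIV \<times> (-S2)) \<inter> H))" by simp
    also have "\<dots> = card ((UNIV \<times> S2) \<inter> H) + card ((UNIV \<times> (-S2)) \<inter> H)"
      by (rule card_Un_disjoint) auto
    finally show ?thesis .
  qed
  have light: "real (card ((UNIV \<times> (-S2)) \<inter> H)) \<le> \<gamma> * real q ^ 2"
  proof -
    have "real (card ((UNIV \<times> (-S2)) \<inter> H)) = (\<Sum>c\<in>-S2. real (card (A c)))"
      by (simp add: colsum)
    also have "\<dots> \<le> (\<Sum>c\<in>-S2. \<gamma> * real q)"
      by (rule sum_mono) (auto simp: S2_def)
    also have "\<dots> = real (card (-S2)) * (\<gamma> * real q)" by simp
    also have "\<dots> \<le> real q * (\<gamma> * real q)"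
      by (rule mult_right_mono) (use g0 in \<open>auto simp: q_def card_mono\<close>)
    finally show ?thesis by (simp add: power2_eq_square algebra_simps)
  qed
  have heavy: "real (card ((UNIV \<times> S2) \<inter> H)) \<ge> \<gamma> * real q ^ 2"
    using Hsplit light cH by simp
  have P3: "real (card ((UNIV \<times> S2) \<inter> H)) \<ge> real (card H) / 2"
    using heavy cH by simp
  have P2: "real (card S2) \<ge> \<gamma> * real q"
  proof -
    have "\<gamma> * real q * real q \<le> real (card ((UNIV \<times> S2) \<inter> H))" using heavy by (simp add: power2_eq_square)
    also have "\<dots> = (\<Sum>c\<in>S2. real (card (A c)))" by (simp add: colsum)
    also have "\<dots> \<le> (\<Sum>c\<in>S2. real q)" by (rule sum_mono) (use cAq in simp)
    also have "\<dots> = real (card S2) * real q" by simp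
    finally show ?thesis using q0 by simp
  qed
  define Bad where "Bad c = {S::'a set. card S = r \<and> real (card (S \<inter> A c)) < \<gamma> / 2 * real r}" for c
  define C where "C = real (q choose r)"
  have rq: "r \<le> q"
  proof -
    have "\<gamma> * real q \<le> 1 * real q" by (rule mult_right_mono) (use g1 in auto)
    then have "real r \<le> real q" using rhi by simp
    then show ?thesis by simp
  qed
  have C0: "C > 0" using rq by (simp add: C_def)
  have expq: "real q * exp (- (\<gamma>^2 * real r / 2)) < 1"
  proof -
    have "2 * ln (real q) < real r * \<gamma>^2" using rlo g0 by (simp add: field_simps)
    then have "ln (real q) - \<gamma>^2 * real r / 2 < 0" by (simp add: algebra_simps)
    then have "exp (ln (real q) - \<gamma>^2 * real r / 2) < 1" by simp
    moreover have "exp (ln (real q) + - (\<gamma>^2 * real r / 2)) = exp (ln (real q)) * exp (- (\<gamma>^2 * real r / 2))"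
      by (rule exp_add)
    moreover have "exp (ln (real q)) = real q" using q0 by simp
    moreover have "ln (real q) + - (\<gamma>^2 * real r / 2) = ln (real q) - \<gamma>^2 * real r / 2" by simp
    ultimately show ?thesis by metis
  qed
  have bad_bound: "real (card (Bad c)) \<le> C * exp (- (\<gamma>^2 * real r / 2))" if "c \<in> S2" for c
    unfolding Bad_def C_def q_def
    by (rule tail_bound) (use g0 g1 that in \<open>auto simp: S2_def q_def\<close>)
  have "real (card (\<Union>c\<in>S2. Bad c)) \<le> real (\<Sum>c\<in>S2. card (Bad c))"
    by (intro of_nat_mono card_UN_le) simp
  also have "\<dots> = (\<Sum>c\<in>S2. real (card (Bad c)))" by simp
  also have "\<dots> \<le> (\<Sum>c\<in>S2. C * exp (- (\<gamma>^2 * real r / 2)))" by (rule sum_mono) (rule bad_bound)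
  also have "\<dots> = real (card S2) * (C * exp (- (\<gamma>^2 * real r / 2)))" by simp
  also have "\<dots> \<le> real q * (C * exp (- (\<gamma>^2 * real r / 2)))"
    by (rule mult_right_mono) (use C0 in \<open>auto simp: q_def card_mono\<close>)
  also have "\<dots> = C * (real q * exp (- (\<gamma>^2 * real r / 2)))" by simp
  also have "\<dots> < C" using expq C0 by simp
  also have "C = real (card {S::'a set. card S = r})"
    using n_subsets[of "UNIV::'a set" r] by (simp add: C_def q_def)
  finally have "card (\<Union>c\<in>S2. Bad c) < card {S::'a set. card S = r}" by simp
  then have "\<not> {S::'a set. card S = r} \<subseteq> (\<Union>c\<in>S2. Bad c)"
    using card_mono[of "\<Union>c\<in>S2. Bad c" "{S::'a set. card S = r}"] by auto
  then obtain S1 where S1: "card S1 = r" "S1 \<notin> (\<Union>c\<in>S2. Bad c)"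
    by blast
  have P5: "\<forall>b\<in>S2. real (card ({(a, b) | a. a \<in> S1} \<inter> H)) \<ge> \<gamma> / 2 * real (card S1)"
    using S1 by (auto simp: crow Bad_def not_less)
  have P4: "\<forall>b\<in>S2. real (card ({(a, b) | a. True} \<inter> H)) \<ge> \<gamma> * real q"
    unfolding crow2 by (auto simp: S2_def)
  show ?thesis using S1(1) P2 P3 P4 P5 by blast
qed

end
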